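(* Let $n\ge1$, let $V=\bigoplus_{i=1}^{2n-1}V_i$ and $W=\bigoplus_{i=1}^{2n-1}W_i$ be arbitrary graded finite-dimensional complex vector spaces, and let $(B_h,\Gamma_i,\Delta_i)\in\Lambda^{\mathrm A_{2n-1}}(V,W)$. Define $A,B\in\mathrm{End}(V)$, $\Gamma\in\mathrm{Hom}(W,V)$, $\Delta\in\mathrm{Hom}(V,W)$ by $A=\bigoplus_{i=1}^{2n-2}B_{i+1,i}$, $B=\bigoplus_{i=1}^{2n-2}\epsilon_iB_{i,i+1}$ with $\epsilon_i=+1$ for $i<n$ and $\epsilon_i=-1$ for $i\ge n$, $\Gamma=\bigoplus_i\Gamma_i$, $\Delta=\bigoplus_i\Delta_i$. Then the elements \[X(z)=\mathrm{id}_W-\sum_{j,k\ge0}\Delta A^jB^k\Gamma\,z^{j+k+2},\qquad Y(z)=\mathrm{id}_W+\sum_{j,k\ge0}\Delta B^kA^j\Gamma\,z^{j+k+2}\] of $\mathrm{End}(W)[z]$ are inverse to each other.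
   Context: $B_{i,j}$ ($|i-j|=1$) denotes a linear map $V_j\to V_i$, $\Gamma_i:W_i\to V_i$, $\Delta_i:V_i\to W_i$. $\Lambda^{\mathrm A_{2n-1}}(V,W)$ is the set of tuples $(B_{i,j},\Gamma_i,\Delta_i)$ satisfying, with the conventions that $B_{0,1},B_{1,0},B_{2n,2n-1},B_{2n-1,2n}$ are zero: $B_{i,i+1}B_{i+1,i}-B_{i,i-1}B_{i-1,i}=\Gamma_i\Delta_i$ for $1\le i\le n-1$; $-B_{n,n-1}B_{n-1,n}-B_{n,n+1}B_{n+1,n}=\Gamma_n\Delta_n$; and $B_{i,i-1}B_{i-1,i}-B_{i,i+1}B_{i+1,i}=\Gamma_i\Delta_i$ for $n+1\le i\le 2n-1$. (These are the preprojective relations for the type $\mathrm A_{2n-1}$ quiver oriented towards the middle vertex $n$.) *)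

theory Defs
  imports "Jordan_Normal_Form.Matrix"
begin

text \<open>Graded spaces: V_i = C^(dv i), W_i = C^(dw i) for i in {1..2n-1}.
  Linear maps are complex matrices. B i j : V_j -> V_i.\<close>

definition Bz :: "nat \<Rightarrow> (nat \<Rightarrow> nat) \<Rightarrow> (nat \<Rightarrow> nat \<Rightarrow> complex mat) \<Rightarrow> nat \<Rightarrow> nat \<Rightarrow> complex mat" where
  "Bz n dv B i j = (if 1 \<le> i \<and> i \<le> 2*n-1 \<and> 1 \<le> j \<and> j \<le> 2*n-1 then B i j else 0\<^sub>m (dv i) (dv j))"

definition Lambda_A :: "nat \<Rightarrow> (nat \<Rightarrow> nat) \<Rightarrow> (nat \<Rightarrow> nat) \<Rightarrow> (nat \<Rightarrow> nat \<Rightarrow> complex mat)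
    \<Rightarrow> (nat \<Rightarrow> complex mat) \<Rightarrow> (nat \<Rightarrow> complex mat) \<Rightarrow> bool" where
  "Lambda_A n dv dw B Gam Del \<longleftrightarrow>
     (\<forall>i j. 1 \<le> i \<and> i \<le> 2*n-1 \<and> 1 \<le> j \<and> j \<le> 2*n-1 \<and> (i = j + 1 \<or> j = i + 1)
        \<longrightarrow> B i j \<in> carrier_mat (dv i) (dv j)) \<and>
     (\<forall>i. 1 \<le> i \<and> i \<le> 2*n-1 \<longrightarrow> Gam i \<in> carrier_mat (dv i) (dw i) \<and> Del i \<in> carrier_mat (dw i) (dv i)) \<and>
     (\<forall>i. 1 \<le> i \<and> i \<le> n - 1 \<longrightarrow>
        Bz n dv B i (i+1) * Bz n dv B (i+1) i - Bz n dv B i (i-1) * Bz n dv B (i-1) i = Gam i * Del i) \<and>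
     (- (Bz n dv B n (n-1) * Bz n dv B (n-1) n) - Bz n dv B n (n+1) * Bz n dv B (n+1) n = Gam n * Del n) \<and>
     (\<forall>i. n + 1 \<le> i \<and> i \<le> 2*n - 1 \<longrightarrow>
        Bz n dv B i (i-1) * Bz n dv B (i-1) i - Bz n dv B i (i+1) * Bz n dv B (i+1) i = Gam i * Del i)"

text \<open>Offsets of the graded pieces inside the direct sum (indices start at 1).\<close>
definition offs :: "(nat \<Rightarrow> nat) \<Rightarrow> nat \<Rightarrow> nat" where
  "offs d i = sum d {1..<i}"

definition blk :: "(nat \<Rightarrow> nat) \<Rightarrow> nat \<Rightarrow> nat" where
  "blk d r = (LEAST i. r < sum d {1..i})"

text \<open>Block matrix on the direct sum over indices 1..m; E i j a b is the (a,b) entry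
  of the (i,j) block (map from piece j to piece i).\<close>
definition block_mat :: "nat \<Rightarrow> (nat \<Rightarrow> nat) \<Rightarrow> (nat \<Rightarrow> nat) \<Rightarrow> (nat \<Rightarrow> nat \<Rightarrow> nat \<Rightarrow> nat \<Rightarrow> complex) \<Rightarrow> complex mat" where
  "block_mat m dr dc E = mat (sum dr {1..m}) (sum dc {1..m})
     (\<lambda>(r, c). E (blk dr r) (blk dc c) (r - offs dr (blk dr r)) (c - offs dc (blk dc c)))"

definition eps :: "nat \<Rightarrow> nat \<Rightarrow> complex" where
  "eps n i = (if i < n then 1 else -1)"

definition Amat :: "nat \<Rightarrow> (nat \<Rightarrow> nat) \<Rightarrow> (nat \<Rightarrow> nat \<Rightarrow> complex mat) \<Rightarrow> complex mat" where
  "Amat n dv B = block_mat (2*n-1) dv dv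
     (\<lambda>i j a b. if 1 \<le> j \<and> j \<le> 2*n-2 \<and> i = j + 1 then B i j $$ (a, b) else 0)"

definition Bmat :: "nat \<Rightarrow> (nat \<Rightarrow> nat) \<Rightarrow> (nat \<Rightarrow> nat \<Rightarrow> complex mat) \<Rightarrow> complex mat" where
  "Bmat n dv B = block_mat (2*n-1) dv dv
     (\<lambda>i j a b. if 1 \<le> i \<and> i \<le> 2*n-2 \<and> j = i + 1 then eps n i * B i j $$ (a, b) else 0)"

definition Gmat :: "nat \<Rightarrow> (nat \<Rightarrow> nat) \<Rightarrow> (nat \<Rightarrow> nat) \<Rightarrow> (nat \<Rightarrow> complex mat) \<Rightarrow> complex mat" where
  "Gmat n dv dw Gam = block_mat (2*n-1) dv dw (\<lambda>i j a b. if i = j then Gam i $$ (a, b) else 0)"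

definition Dmat :: "nat \<Rightarrow> (nat \<Rightarrow> nat) \<Rightarrow> (nat \<Rightarrow> nat) \<Rightarrow> (nat \<Rightarrow> complex mat) \<Rightarrow> complex mat" where
  "Dmat n dv dw Del = block_mat (2*n-1) dw dv (\<lambda>i j a b. if i = j then Del i $$ (a, b) else 0)"

definition msum :: "nat \<Rightarrow> nat \<Rightarrow> ('i \<Rightarrow> complex mat) \<Rightarrow> 'i list \<Rightarrow> complex mat" where
  "msum N M f xs = foldr (\<lambda>x acc. f x + acc) xs (0\<^sub>m N M)"

text \<open>Coefficients of z^m in X(z) and Y(z) (N = dim W).\<close>
definition Xcoeff :: "nat \<Rightarrow> complex mat \<Rightarrow> complex mat \<Rightarrow> complex mat \<Rightarrow> complex mat \<Rightarrow> nat \<Rightarrow> complex mat" where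
  "Xcoeff N A B G D m =
     (if m = 0 then 1\<^sub>m N else if m = 1 then 0\<^sub>m N N
      else - msum N N (\<lambda>j. D * A ^\<^sub>m j * B ^\<^sub>m (m - 2 - j) * G) [0..<m - 1])"

definition Ycoeff :: "nat \<Rightarrow> complex mat \<Rightarrow> complex mat \<Rightarrow> complex mat \<Rightarrow> complex mat \<Rightarrow> nat \<Rightarrow> complex mat" where
  "Ycoeff N A B G D m =
     (if m = 0 then 1\<^sub>m N else if m = 1 then 0\<^sub>m N N
      else msum N N (\<lambda>j. D * B ^\<^sub>m (m - 2 - j) * A ^\<^sub>m j * G) [0..<m - 1])"

definition poly_inverse_pair :: "nat \<Rightarrow> (nat \<Rightarrow> complex mat) \<Rightarrow> (nat \<Rightarrow> complex mat) \<Rightarrow> bool" where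
  "poly_inverse_pair N P Q \<longleftrightarrow>
     (\<forall>m. msum N N (\<lambda>p. P p * Q (m - p)) [0..<Suc m] = (if m = 0 then 1\<^sub>m N else 0\<^sub>m N N)) \<and>
     (\<forall>m. msum N N (\<lambda>p. Q p * P (m - p)) [0..<Suc m] = (if m = 0 then 1\<^sub>m N else 0\<^sub>m N N))"

end

theory Submission
  imports Defs
begin

context ring begin

lemma pow_comm1: "x \<in> carrier R \<Longrightarrow> x [^] (i::nat) \<otimes> x = x \<otimes> x [^] i"
  by (metis nat_pow_Suc nat_pow_Suc2)

lemma pow_comm2: "x \<in> carrier R \<Longrightarrow> z \<in> carrier R \<Longrightarrow> x [^] (i::nat) \<otimes> (x \<otimes> z) = x \<otimes> (x [^] i \<otimes> z)"
  by (metis m_assoc nat_pow_closed pow_comm1)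

definition PP :: "'a \<Rightarrow> 'a \<Rightarrow> nat \<Rightarrow> 'a" where
  "PP x y u = (\<Oplus>j\<in>{..u}. x [^] j \<otimes> y [^] (u - j))"
definition QQ :: "'a \<Rightarrow> 'a \<Rightarrow> nat \<Rightarrow> 'a" where
  "QQ x y u = (\<Oplus>j\<in>{..u}. y [^] (u - j) \<otimes> x [^] j)"

lemma PP_closed[simp]: "x \<in> carrier R \<Longrightarrow> y \<in> carrier R \<Longrightarrow> PP x y u \<in> carrier R"
  unfolding PP_def by (auto intro!: finsum_closed)
lemma QQ_closed[simp]: "x \<in> carrier R \<Longrightarrow> y \<in> carrier R \<Longrightarrow> QQ x y u \<in> carrier R"
  unfolding QQ_def by (auto intro!: finsum_closed)

lemma PP_0[simp]: "x \<in> carrier R \<Longrightarrow> y \<in> carrier R \<Longrightarrow> PP x y 0 = \<one>"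
  unfolding PP_def by simp
lemma QQ_0[simp]: "x \<in> carrier R \<Longrightarrow> y \<in> carrier R \<Longrightarrow> QQ x y 0 = \<one>"
  unfolding QQ_def by simp

lemma PP_Suc1: assumes x: "x \<in> carrier R" and y: "y \<in> carrier R"
  shows "PP x y (Suc u) = x \<otimes> PP x y u \<oplus> y [^] Suc u"
proof -
  have "PP x y (Suc u) = (\<Oplus>j\<in>{..u}. x [^] Suc j \<otimes> y [^] (Suc u - Suc j)) \<oplus> y [^] Suc u"
    unfolding PP_def using x y by (subst finsum_Suc2) auto
  also have "(\<Oplus>j\<in>{..u}. x [^] Suc j \<otimes> y [^] (Suc u - Suc j)) = (\<Oplus>j\<in>{..u}. x \<otimes> (x [^] j \<otimes> y [^] (u - j)))"
    using x y by (intro finsum_cong') (auto simp: m_assoc pow_comm2)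
  also have "\<dots> = x \<otimes> PP x y u" unfolding PP_def using x y by (subst finsum_rdistr) auto
  finally show ?thesis .
qed

lemma PP_Suc2: assumes x: "x \<in> carrier R" and y: "y \<in> carrier R"
  shows "PP x y (Suc u) = PP x y u \<otimes> y \<oplus> x [^] Suc u"
proof -
  have "PP x y (Suc u) = x [^] Suc u \<oplus> (\<Oplus>j\<in>{..u}. x [^] j \<otimes> y [^] (Suc u - j))"
    unfolding PP_def using x y by (subst finsum_Suc) auto
  also have "(\<Oplus>j\<in>{..u}. x [^] j \<otimes> y [^] (Suc u - j)) = (\<Oplus>j\<in>{..u}. (x [^] j \<otimes> y [^] (u - j)) \<otimes> y)"
    using x y by (intro finsum_cong') (auto simp: Suc_diff_le m_assoc)
  also have "\<dots> = PP x y u \<otimes> y" unfolding PP_def using x y by (subst finsum_ldistr) auto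
  finally show ?thesis using x y by (simp add: a_comm)
qed

lemma QQ_Suc1: assumes x: "x \<in> carrier R" and y: "y \<in> carrier R"
  shows "QQ x y (Suc u) = y \<otimes> QQ x y u \<oplus> x [^] Suc u"
proof -
  have "QQ x y (Suc u) = x [^] Suc u \<oplus> (\<Oplus>j\<in>{..u}. y [^] (Suc u - j) \<otimes> x [^] j)"
    unfolding QQ_def using x y by (subst finsum_Suc) auto
  also have "(\<Oplus>j\<in>{..u}. y [^] (Suc u - j) \<otimes> x [^] j) = (\<Oplus>j\<in>{..u}. y \<otimes> (y [^] (u - j) \<otimes> x [^] j))"
    using x y by (intro finsum_cong') (auto simp: Suc_diff_le m_assoc pow_comm2)
  also have "\<dots> = y \<otimes> QQ x y u" unfolding QQ_def using x y by (subst finsum_rdistr) auto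
  finally show ?thesis using x y by (simp add: a_comm)
qed

lemma QQ_Suc2: assumes x: "x \<in> carrier R" and y: "y \<in> carrier R"
  shows "QQ x y (Suc u) = QQ x y u \<otimes> x \<oplus> y [^] Suc u"
proof -
  have "QQ x y (Suc u) = (\<Oplus>j\<in>{..u}. y [^] (Suc u - Suc j) \<otimes> x [^] Suc j) \<oplus> y [^] Suc u"
    unfolding QQ_def using x y by (subst finsum_Suc2) auto
  also have "(\<Oplus>j\<in>{..u}. y [^] (Suc u - Suc j) \<otimes> x [^] Suc j) = (\<Oplus>j\<in>{..u}. (y [^] (u - j) \<otimes> x [^] j) \<otimes> x)"
    using x y by (intro finsum_cong') (auto simp: m_assoc)
  also have "\<dots> = QQ x y u \<otimes> x" unfolding QQ_def using x y by (subst finsum_ldistr) auto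
  finally show ?thesis .
qed


definition TT where "TT x y c u = (\<Oplus>s\<in>{..u}. y [^] s \<otimes> c \<otimes> QQ x y (u - s))"
definition SS where "SS x y c u = (\<Oplus>s\<in>{..u}. PP x y s \<otimes> c \<otimes> QQ x y (u - s))"
definition UU where "UU x y c u = (\<Oplus>s\<in>{..u}. QQ x y s \<otimes> c \<otimes> x [^] (u - s))"
definition RR where "RR x y c u = (\<Oplus>s\<in>{..u}. QQ x y s \<otimes> c \<otimes> PP x y (u - s))"

lemma TT_closed[simp]: "x \<in> carrier R \<Longrightarrow> y \<in> carrier R \<Longrightarrow> c \<in> carrier R \<Longrightarrow> TT x y c u \<in> carrier R"
  unfolding TT_def by (auto intro!: finsum_closed)
lemma SS_closed[simp]: "x \<in> carrier R \<Longrightarrow> y \<in> carrier R \<Longrightarrow> c \<in> carrier R \<Longrightarrow> SS x y c u \<in> carrier R"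
  unfolding SS_def by (auto intro!: finsum_closed)
lemma UU_closed[simp]: "x \<in> carrier R \<Longrightarrow> y \<in> carrier R \<Longrightarrow> c \<in> carrier R \<Longrightarrow> UU x y c u \<in> carrier R"
  unfolding UU_def by (auto intro!: finsum_closed)
lemma RR_closed[simp]: "x \<in> carrier R \<Longrightarrow> y \<in> carrier R \<Longrightarrow> c \<in> carrier R \<Longrightarrow> RR x y c u \<in> carrier R"
  unfolding RR_def by (auto intro!: finsum_closed)

lemma TT_Suc: assumes x: "x \<in> carrier R" and y: "y \<in> carrier R" and c: "c \<in> carrier R"
  shows "TT x y c (Suc u) = y \<otimes> TT x y c u \<oplus> c \<otimes> QQ x y (Suc u)"
proof -
  have "TT x y c (Suc u) = (\<Oplus>s\<in>{..u}. y [^] Suc s \<otimes> c \<otimes> QQ x y (Suc u - Suc s)) \<oplus> c \<otimes> QQ x y (Suc u)"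
    unfolding TT_def using x y c by (subst finsum_Suc2) auto
  also have "(\<Oplus>s\<in>{..u}. y [^] Suc s \<otimes> c \<otimes> QQ x y (Suc u - Suc s)) = (\<Oplus>s\<in>{..u}. y \<otimes> (y [^] s \<otimes> c \<otimes> QQ x y (u - s)))"
    using x y c by (intro finsum_cong') (auto simp: m_assoc pow_comm2)
  also have "\<dots> = y \<otimes> TT x y c u" unfolding TT_def using x y c by (subst finsum_rdistr) auto
  finally show ?thesis .
qed

lemma UU_Suc: assumes x: "x \<in> carrier R" and y: "y \<in> carrier R" and c: "c \<in> carrier R"
  shows "UU x y c (Suc u) = UU x y c u \<otimes> x \<oplus> QQ x y (Suc u) \<otimes> c"
proof -
  have "UU x y c (Suc u) = QQ x y (Suc u) \<otimes> c \<oplus> (\<Oplus>s\<in>{..u}. QQ x y s \<otimes> c \<otimes> x [^] (Suc u - s))"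
    unfolding UU_def using x y c by (subst finsum_Suc) auto
  also have "(\<Oplus>s\<in>{..u}. QQ x y s \<otimes> c \<otimes> x [^] (Suc u - s)) = (\<Oplus>s\<in>{..u}. (QQ x y s \<otimes> c \<otimes> x [^] (u - s)) \<otimes> x)"
    using x y c by (intro finsum_cong') (auto simp: m_assoc Suc_diff_le)
  also have "\<dots> = UU x y c u \<otimes> x" unfolding UU_def using x y c by (subst finsum_ldistr) auto
  finally show ?thesis using x y c by (simp add: a_comm)
qed

lemma SS_Suc: assumes x: "x \<in> carrier R" and y: "y \<in> carrier R" and c: "c \<in> carrier R"
  shows "SS x y c (Suc u) = x \<otimes> SS x y c u \<oplus> TT x y c (Suc u)"
proof -
  have "SS x y c (Suc u) = (\<Oplus>s\<in>{..u}. PP x y (Suc s) \<otimes> c \<otimes> QQ x y (Suc u - Suc s)) \<oplus> c \<otimes> QQ x y (Suc u)"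
    unfolding SS_def using x y c by (subst finsum_Suc2) auto
  also have "(\<Oplus>s\<in>{..u}. PP x y (Suc s) \<otimes> c \<otimes> QQ x y (Suc u - Suc s)) = (\<Oplus>s\<in>{..u}. x \<otimes> (PP x y s \<otimes> c \<otimes> QQ x y (u - s)) \<oplus> y [^] Suc s \<otimes> c \<otimes> QQ x y (Suc u - Suc s))"
    using x y c by (intro finsum_cong') (auto simp: m_assoc PP_Suc1 l_distr simp del: nat_pow_Suc)
  also have "\<dots> = x \<otimes> SS x y c u \<oplus> (\<Oplus>s\<in>{..u}. y [^] Suc s \<otimes> c \<otimes> QQ x y (Suc u - Suc s))"
    unfolding SS_def using x y c by (subst finsum_addf) (auto simp: finsum_rdistr simp del: nat_pow_Suc)
  also have "TT x y c (Suc u) = (\<Oplus>s\<in>{..u}. y [^] Suc s \<otimes> c \<otimes> QQ x y (Suc u - Suc s)) \<oplus> c \<otimes> QQ x y (Suc u)"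
    unfolding TT_def using x y c by (subst finsum_Suc2) auto
  ultimately show ?thesis using x y c by (simp add: a_ac del: nat_pow_Suc)
qed

lemma RR_Suc: assumes x: "x \<in> carrier R" and y: "y \<in> carrier R" and c: "c \<in> carrier R"
  shows "RR x y c (Suc u) = RR x y c u \<otimes> y \<oplus> UU x y c (Suc u)"
proof -
  have "RR x y c (Suc u) = QQ x y (Suc u) \<otimes> c \<oplus> (\<Oplus>s\<in>{..u}. QQ x y s \<otimes> c \<otimes> PP x y (Suc u - s))"
    unfolding RR_def using x y c by (subst finsum_Suc) (auto simp: Suc_diff_le)
  also have "(\<Oplus>s\<in>{..u}. QQ x y s \<otimes> c \<otimes> PP x y (Suc u - s)) = (\<Oplus>s\<in>{..u}. (QQ x y s \<otimes> c \<otimes> PP x y (u - s)) \<otimes> y \<oplus> QQ x y s \<otimes> c \<otimes> x [^] (Suc u - s))"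
    using x y c by (intro finsum_cong') (auto simp: m_assoc PP_Suc2 r_distr Suc_diff_le simp del: nat_pow_Suc)
  also have "\<dots> = RR x y c u \<otimes> y \<oplus> (\<Oplus>s\<in>{..u}. QQ x y s \<otimes> c \<otimes> x [^] (Suc u - s))"
    unfolding RR_def using x y c by (subst finsum_addf) (auto simp: finsum_ldistr simp del: nat_pow_Suc)
  also have "UU x y c (Suc u) = QQ x y (Suc u) \<otimes> c \<oplus> (\<Oplus>s\<in>{..u}. QQ x y s \<otimes> c \<otimes> x [^] (Suc u - s))"
    unfolding UU_def using x y c by (subst finsum_Suc) (auto simp: Suc_diff_le simp del: nat_pow_Suc)
  ultimately show ?thesis using x y c by (simp add: a_ac del: nat_pow_Suc)
qed

lemma TT_id: assumes x: "x \<in> carrier R" and y: "y \<in> carrier R" and c: "c \<in> carrier R"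
  and hc: "c \<oplus> x \<otimes> y = y \<otimes> x"
  shows "TT x y c u \<oplus> y [^] Suc (Suc u) \<oplus> x \<otimes> QQ x y (Suc u) = QQ x y (Suc (Suc u))"
proof (induction u)
  case 0
  have q1: "QQ x y (Suc 0) = y \<oplus> x" using x y by (simp add: QQ_Suc1)
  have q2: "QQ x y (Suc (Suc 0)) = y \<otimes> (y \<oplus> x) \<oplus> x \<otimes> x" using x y
    by (simp add: QQ_Suc1[of x y "Suc 0"] q1 del: nat_pow_Suc)
  have t0: "TT x y c 0 = c" unfolding TT_def using x y c by simp
  have yy: "y [^] Suc (Suc 0) = y \<otimes> y" using y by (simp add: nat_pow_def)
  show ?case unfolding q1 q2 t0 yy using x y c
    by (simp add: r_distr hc[symmetric] a_ac)
next
  case (Suc u)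
  let ?T = "TT x y c u" and ?Q1 = "QQ x y (Suc u)" and ?Q2 = "QQ x y (Suc (Suc u))"
  have e1: "TT x y c (Suc u) = y \<otimes> ?T \<oplus> c \<otimes> ?Q1" using TT_Suc[OF x y c] .
  have e2: "x \<otimes> ?Q2 = x \<otimes> (y \<otimes> ?Q1) \<oplus> x [^] Suc (Suc (Suc u))"
    using x y by (simp add: QQ_Suc1[of x y "Suc u"] r_distr nat_pow_Suc2 del: nat_pow_Suc Group.nat_pow_Suc)
  have e3: "QQ x y (Suc (Suc (Suc u))) = y \<otimes> ?T \<oplus> y [^] Suc (Suc (Suc u)) \<oplus> (c \<otimes> ?Q1 \<oplus> x \<otimes> (y \<otimes> ?Q1)) \<oplus> x [^] Suc (Suc (Suc u))"
  proof -
    have "QQ x y (Suc (Suc (Suc u))) = y \<otimes> ?Q2 \<oplus> x [^] Suc (Suc (Suc u))"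
      using QQ_Suc1[OF x y] by blast
    also have "y \<otimes> ?Q2 = y \<otimes> ?T \<oplus> y [^] Suc (Suc (Suc u)) \<oplus> (y \<otimes> x) \<otimes> ?Q1"
      unfolding Suc.IH[symmetric] using x y c by (simp add: r_distr m_assoc nat_pow_Suc2 del: nat_pow_Suc Group.nat_pow_Suc)
    also have "(y \<otimes> x) \<otimes> ?Q1 = c \<otimes> ?Q1 \<oplus> x \<otimes> (y \<otimes> ?Q1)"
      unfolding hc[symmetric] using x y c by (simp add: l_distr m_assoc)
    finally show ?thesis .
  qed
  show ?case unfolding e1 e2 e3 using x y c by (simp add: a_ac del: nat_pow_Suc)
qed

lemma UU_id: assumes x: "x \<in> carrier R" and y: "y \<in> carrier R" and c: "c \<in> carrier R"
  and hc: "c \<oplus> x \<otimes> y = y \<otimes> x"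
  shows "UU x y c u \<oplus> x [^] Suc (Suc u) \<oplus> QQ x y (Suc u) \<otimes> y = QQ x y (Suc (Suc u))"
proof (induction u)
  case 0
  have q1: "QQ x y (Suc 0) = x \<oplus> y" using x y by (simp add: QQ_Suc2)
  have q2: "QQ x y (Suc (Suc 0)) = (x \<oplus> y) \<otimes> x \<oplus> y \<otimes> y" using x y
    by (simp add: QQ_Suc2[of x y "Suc 0"] q1 del: nat_pow_Suc)
  have t0: "UU x y c 0 = c" unfolding UU_def using x y c by simp
  have xx: "x [^] Suc (Suc 0) = x \<otimes> x" using x by (simp add: nat_pow_def)
  show ?case unfolding q1 q2 t0 xx using x y c
    by (simp add: l_distr hc[symmetric] a_ac)
next
  case (Suc u)
  let ?T = "UU x y c u" and ?Q1 = "QQ x y (Suc u)" and ?Q2 = "QQ x y (Suc (Suc u))"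
  have e1: "UU x y c (Suc u) = ?T \<otimes> x \<oplus> ?Q1 \<otimes> c" using UU_Suc[OF x y c] .
  have e2: "?Q2 \<otimes> y = ?Q1 \<otimes> x \<otimes> y \<oplus> y [^] Suc (Suc (Suc u))"
    using x y by (simp add: QQ_Suc2[of x y "Suc u"] l_distr del: nat_pow_Suc)
  have e3: "QQ x y (Suc (Suc (Suc u))) = ?T \<otimes> x \<oplus> x [^] Suc (Suc (Suc u)) \<oplus> (?Q1 \<otimes> c \<oplus> ?Q1 \<otimes> x \<otimes> y) \<oplus> y [^] Suc (Suc (Suc u))"
  proof -
    have "QQ x y (Suc (Suc (Suc u))) = ?Q2 \<otimes> x \<oplus> y [^] Suc (Suc (Suc u))"
      using QQ_Suc2[OF x y] by blast
    also have "?Q2 \<otimes> x = ?T \<otimes> x \<oplus> x [^] Suc (Suc (Suc u)) \<oplus> ?Q1 \<otimes> (y \<otimes> x)"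
      unfolding Suc.IH[symmetric] using x y c by (simp add: l_distr m_assoc del: nat_pow_Suc)
    also have "?Q1 \<otimes> (y \<otimes> x) = ?Q1 \<otimes> c \<oplus> ?Q1 \<otimes> x \<otimes> y"
      unfolding hc[symmetric] using x y c by (simp add: r_distr m_assoc)
    finally show ?thesis .
  qed
  show ?case unfolding e1 e2 e3 using x y c by (simp add: a_ac del: nat_pow_Suc)
qed

end

context ring begin
lemma SS_id: assumes x: "x \<in> carrier R" and y: "y \<in> carrier R" and c: "c \<in> carrier R"
  and hc: "c \<oplus> x \<otimes> y = y \<otimes> x"
  shows "SS x y c u \<oplus> PP x y (Suc (Suc u)) = QQ x y (Suc (Suc u))"
proof (induction u)
  case 0
  have p1: "PP x y (Suc 0) = x \<oplus> y" using x y by (simp add: PP_Suc1)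
  have p2: "PP x y (Suc (Suc 0)) = x \<otimes> (x \<oplus> y) \<oplus> y \<otimes> y" using x y
    by (simp add: PP_Suc1[of x y "Suc 0"] p1 del: nat_pow_Suc)
  have q1: "QQ x y (Suc 0) = y \<oplus> x" using x y by (simp add: QQ_Suc1)
  have q2: "QQ x y (Suc (Suc 0)) = y \<otimes> (y \<oplus> x) \<oplus> x \<otimes> x" using x y
    by (simp add: QQ_Suc1[of x y "Suc 0"] q1 del: nat_pow_Suc)
  have t0: "SS x y c 0 = c" unfolding SS_def using x y c by simp
  show ?case unfolding p2 q2 t0 using x y c
    by (simp add: r_distr hc[symmetric] a_ac)
next
  case (Suc u)
  have "SS x y c (Suc u) \<oplus> PP x y (Suc (Suc (Suc u))) =
     TT x y c (Suc u) \<oplus> y [^] Suc (Suc (Suc u)) \<oplus> x \<otimes> (SS x y c u \<oplus> PP x y (Suc (Suc u)))"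
    using x y c by (simp add: SS_Suc PP_Suc1[of x y "Suc (Suc u)"] r_distr a_ac del: nat_pow_Suc Group.nat_pow_Suc)
  also have "\<dots> = QQ x y (Suc (Suc (Suc u)))" unfolding Suc.IH using TT_id[OF x y c hc, of "Suc u"] .
  finally show ?case .
qed

lemma RR_id: assumes x: "x \<in> carrier R" and y: "y \<in> carrier R" and c: "c \<in> carrier R"
  and hc: "c \<oplus> x \<otimes> y = y \<otimes> x"
  shows "RR x y c u \<oplus> PP x y (Suc (Suc u)) = QQ x y (Suc (Suc u))"
proof (induction u)
  case 0
  have p1: "PP x y (Suc 0) = y \<oplus> x" using x y by (simp add: PP_Suc2)
  have p2: "PP x y (Suc (Suc 0)) = (y \<oplus> x) \<otimes> y \<oplus> x \<otimes> x" using x y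
    by (simp add: PP_Suc2[of x y "Suc 0"] p1 del: nat_pow_Suc)
  have q1: "QQ x y (Suc 0) = x \<oplus> y" using x y by (simp add: QQ_Suc2)
  have q2: "QQ x y (Suc (Suc 0)) = (x \<oplus> y) \<otimes> x \<oplus> y \<otimes> y" using x y
    by (simp add: QQ_Suc2[of x y "Suc 0"] q1 del: nat_pow_Suc)
  have t0: "RR x y c 0 = c" unfolding RR_def using x y c by simp
  show ?case unfolding p2 q2 t0 using x y c
    by (simp add: l_distr hc[symmetric] a_ac)
next
  case (Suc u)
  have "RR x y c (Suc u) \<oplus> PP x y (Suc (Suc (Suc u))) =
     UU x y c (Suc u) \<oplus> x [^] Suc (Suc (Suc u)) \<oplus> (RR x y c u \<oplus> PP x y (Suc (Suc u))) \<otimes> y"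
    using x y c by (simp add: RR_Suc PP_Suc2[of x y "Suc (Suc u)"] l_distr a_ac del: nat_pow_Suc Group.nat_pow_Suc)
  also have "\<dots> = QQ x y (Suc (Suc (Suc u)))" unfolding Suc.IH using UU_id[OF x y c hc, of "Suc u"] .
  finally show ?case .
qed

end

context ring begin
definition PPs where "PPs x y s = (if s < 2 then \<zero> else PP x y (s - 2))"
definition QQs where "QQs x y s = (if s < 2 then \<zero> else QQ x y (s - 2))"

lemma PPs_closed[simp]: "x \<in> carrier R \<Longrightarrow> y \<in> carrier R \<Longrightarrow> PPs x y u \<in> carrier R"
  unfolding PPs_def by auto
lemma QQs_closed[simp]: "x \<in> carrier R \<Longrightarrow> y \<in> carrier R \<Longrightarrow> QQs x y u \<in> carrier R"
  unfolding QQs_def by auto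

lemma shift_sum: fixes m u :: nat
  assumes F: "F \<in> {1..<m} \<rightarrow> carrier R" and m: "m = u + 4"
    and z1: "F 1 = \<zero>" and z2: "F (u+3) = \<zero>"
  shows "(\<Oplus>p\<in>{1..<m}. F p) = (\<Oplus>s\<in>{..u}. F (s + 2))"
proof -
  have sub: "(\<lambda>s. s + 2) ` {..u} \<subseteq> {1..<m}" using m by auto
  have "(\<Oplus>p\<in>{1..<m}. F p) = (\<Oplus>p\<in>(\<lambda>s. s + 2) ` {..u}. F p)"
  proof (rule add.finprod_mono_neutral_cong_right[OF _ sub])
    show "\<And>i. i \<in> {1..<m} - (\<lambda>s. s + 2) ` {..u} \<Longrightarrow> F i = \<zero>"
    proof -
      fix i assume i: "i \<in> {1..<m} - (\<lambda>s. s + 2) ` {..u}"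
      have "\<not> (2 \<le> i \<and> i \<le> u + 2)"
      proof
        assume "2 \<le> i \<and> i \<le> u + 2"
        then have "i \<in> (\<lambda>s. s + 2) ` {..u}" by (intro image_eqI[of _ _ "i - 2"]) auto
        then show False using i by blast
      qed
      then have "i = 1 \<or> i = u + 3" using i m by auto
      then show "F i = \<zero>" using z1 z2 by auto
    qed
  qed (use F in auto)
  also have "\<dots> = (\<Oplus>s\<in>{..u}. F (s + 2))"
    by (rule finsum_reindex) (use F m in \<open>auto simp: inj_on_def\<close>)
  finally show ?thesis .
qed

lemma shiftS: assumes x: "x \<in> carrier R" and y: "y \<in> carrier R" and c: "c \<in> carrier R"
  and hc: "c \<oplus> x \<otimes> y = y \<otimes> x"
  shows "(\<Oplus>p\<in>{1..<m}. PPs x y p \<otimes> c \<otimes> QQs x y (m - p)) \<oplus> PPs x y m = QQs x y m"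
proof (cases "m < 4")
  case True
  have z: "(\<Oplus>p\<in>{1..<m}. PPs x y p \<otimes> c \<otimes> QQs x y (m - p)) = \<zero>"
    by (rule add.finprod_one_eqI) (use True x y c in \<open>auto simp: PPs_def QQs_def\<close>)
  have "m = 0 \<or> m = 1 \<or> m = 2 \<or> m = 3" using True by auto
  then show ?thesis unfolding z using x y
    by (auto simp: PPs_def QQs_def numeral_3_eq_3 PP_Suc1 QQ_Suc1 a_comm)
next
  case False
  then obtain u where m: "m = u + 4" by (metis add.commute le_Suc_ex not_less)
  have "(\<Oplus>p\<in>{1..<m}. PPs x y p \<otimes> c \<otimes> QQs x y (m - p)) = (\<Oplus>s\<in>{..u}. PPs x y (s+2) \<otimes> c \<otimes> QQs x y (m - (s+2)))"
    by (rule shift_sum[OF _ m]) (use x y c m in \<open>auto simp: PPs_def QQs_def\<close>)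
  also have "\<dots> = SS x y c u" unfolding SS_def
    by (rule finsum_cong') (use x y c m in \<open>auto simp: PPs_def QQs_def Suc_diff_le\<close>)
  finally show ?thesis using SS_id[OF x y c hc, of u] m by (simp add: PPs_def QQs_def)
qed

lemma shiftR: assumes x: "x \<in> carrier R" and y: "y \<in> carrier R" and c: "c \<in> carrier R"
  and hc: "c \<oplus> x \<otimes> y = y \<otimes> x"
  shows "(\<Oplus>p\<in>{1..<m}. QQs x y p \<otimes> c \<otimes> PPs x y (m - p)) \<oplus> PPs x y m = QQs x y m"
proof (cases "m < 4")
  case True
  have z: "(\<Oplus>p\<in>{1..<m}. QQs x y p \<otimes> c \<otimes> PPs x y (m - p)) = \<zero>"
    by (rule add.finprod_one_eqI) (use True x y c in \<open>auto simp: PPs_def QQs_def\<close>)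
  have "m = 0 \<or> m = 1 \<or> m = 2 \<or> m = 3" using True by auto
  then show ?thesis unfolding z using x y
    by (auto simp: PPs_def QQs_def numeral_3_eq_3 PP_Suc1 QQ_Suc1 a_comm)
next
  case False
  then obtain u where m: "m = u + 4" by (metis add.commute le_Suc_ex not_less)
  have "(\<Oplus>p\<in>{1..<m}. QQs x y p \<otimes> c \<otimes> PPs x y (m - p)) = (\<Oplus>s\<in>{..u}. QQs x y (s+2) \<otimes> c \<otimes> PPs x y (m - (s+2)))"
    by (rule shift_sum[OF _ m]) (use x y c m in \<open>auto simp: PPs_def QQs_def\<close>)
  also have "\<dots> = RR x y c u" unfolding RR_def
    by (rule finsum_cong') (use x y c m in \<open>auto simp: PPs_def QQs_def Suc_diff_le\<close>)
  finally show ?thesis using RR_id[OF x y c hc, of u] m by (simp add: PPs_def QQs_def)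
qed

end

abbreviation RM :: "nat \<Rightarrow> (complex mat, unit) ring_scheme" where
  "RM K \<equiv> ring_mat TYPE(complex) K ()"

lemma msum_Nil[simp]: "msum N M f [] = 0\<^sub>m N M" by (simp add: msum_def)
lemma msum_Cons[simp]: "msum N M f (x # xs) = f x + msum N M f xs" by (simp add: msum_def)

lemma msum_carrier: "(\<And>x. x \<in> set xs \<Longrightarrow> f x \<in> carrier_mat N M) \<Longrightarrow> msum N M f xs \<in> carrier_mat N M"
  by (induction xs) auto

lemma msum_cong: "(\<And>x. x \<in> set xs \<Longrightarrow> f x = g x) \<Longrightarrow> msum N M f xs = msum N M g xs"
  by (induction xs) auto

lemma msum_append: "(\<And>x. x \<in> set xs \<union> set ys \<Longrightarrow> f x \<in> carrier_mat N M) \<Longrightarrow>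
   msum N M f (xs @ ys) = msum N M f xs + msum N M f ys"
proof (induction xs)
  case Nil then show ?case by (simp add: msum_carrier)
next
  case (Cons a xs)
  have c: "f a \<in> carrier_mat N M" "msum N M f xs \<in> carrier_mat N M" "msum N M f ys \<in> carrier_mat N M"
    using Cons.prems by (auto intro!: msum_carrier)
  have "msum N M f ((a # xs) @ ys) = f a + (msum N M f xs + msum N M f ys)" using Cons by simp
  also have "\<dots> = f a + msum N M f xs + msum N M f ys" by (rule assoc_add_mat[OF c, symmetric])
  finally show ?case by simp
qed

lemma msum_mult_left: assumes L: "L \<in> carrier_mat a K" and f: "\<And>x. x \<in> set xs \<Longrightarrow> f x \<in> carrier_mat K M"
  shows "L * msum K M f xs = msum a M (\<lambda>x. L * f x) xs"
  using f
proof (induction xs)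
  case Nil then show ?case using L by simp
next
  case (Cons x xs)
  then show ?case using L by (simp add: mult_add_distrib_mat[OF L _ msum_carrier])
qed

lemma msum_mult_right: assumes L: "L \<in> carrier_mat M b" and f: "\<And>x. x \<in> set xs \<Longrightarrow> f x \<in> carrier_mat K M"
  shows "msum K M f xs * L = msum K b (\<lambda>x. f x * L) xs"
  using f
proof (induction xs)
  case Nil then show ?case using L by simp
next
  case (Cons x xs)
  then show ?case using L by (simp add: add_mult_distrib_mat[OF _ msum_carrier L])
qed

lemma msum_uminus: assumes f: "\<And>x. x \<in> set xs \<Longrightarrow> f x \<in> carrier_mat K M"
  shows "msum K M (\<lambda>x. - f x) xs = - msum K M f xs"
  using f
proof (induction xs)
  case Nil then show ?case by (intro eq_matI) auto
next
  case (Cons x xs)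
  have c: "f x \<in> carrier_mat K M" "msum K M f xs \<in> carrier_mat K M"
    using Cons.prems by (auto intro!: msum_carrier)
  have "msum K M (\<lambda>x. - f x) (x # xs) = - f x + - msum K M f xs" using Cons by simp
  also have "\<dots> = - msum K M f (x # xs)" using c[unfolded carrier_mat_def] by (intro eq_matI) auto
  finally show ?case .
qed

lemma msum_finsum: assumes "distinct xs" and f: "\<And>x. x \<in> set xs \<Longrightarrow> f x \<in> carrier_mat K K"
  shows "msum K K f xs = finsum (RM K) f (set xs)"
  using assms
proof (induction xs)
  case Nil
  interpret R: ring "RM K" by (rule ring_mat)
  show ?case by (simp add: ring_mat_simps)
next
  case (Cons x xs)
  interpret R: ring "RM K" by (rule ring_mat)
  have "finsum (RM K) f (set (x # xs)) = f x \<oplus>\<^bsub>RM K\<^esub> finsum (RM K) f (set xs)"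
    using Cons.prems by (simp add: R.finsum_insert ring_mat_simps Pi_def)
  then show ?case using Cons by (simp add: ring_mat_simps)
qed


lemma sandwich: assumes D: "D \<in> carrier_mat N K" and P: "P \<in> carrier_mat K K" and Q: "Q \<in> carrier_mat K K"
  and G: "G \<in> carrier_mat K N"
  shows "(D * P * G) * (D * Q * G) = D * (P * (G * D) * Q) * G"
  using D P Q G by (simp add: assoc_mult_mat[of _ N N _ N _ N] assoc_mult_mat[of _ N N _ N _ K] assoc_mult_mat[of _ N N _ K _ N] assoc_mult_mat[of _ N N _ K _ K] assoc_mult_mat[of _ N K _ N _ N] assoc_mult_mat[of _ N K _ N _ K] assoc_mult_mat[of _ N K _ K _ N] assoc_mult_mat[of _ N K _ K _ K] assoc_mult_mat[of _ K N _ N _ N] assoc_mult_mat[of _ K N _ N _ K] assoc_mult_mat[of _ K N _ K _ N] assoc_mult_mat[of _ K N _ K _ K] assoc_mult_mat[of _ K K _ N _ N] assoc_mult_mat[of _ K K _ N _ K] assoc_mult_mat[of _ K K _ K _ N] assoc_mult_mat[of _ K K _ K _ K])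

lemma upt_split: "1 \<le> m \<Longrightarrow> [0..<Suc m] = 0 # ([1..<m] @ [m])"
  by (simp add: upt_conv_Cons)

lemma msum_sandwich: assumes D: "D \<in> carrier_mat N K" and G: "G \<in> carrier_mat K N"
  and f: "\<And>x. x \<in> set xs \<Longrightarrow> f x \<in> carrier_mat K K"
  shows "msum N N (\<lambda>x. D * f x * G) xs = D * msum K K f xs * G"
proof -
  have "D * msum K K f xs * G = msum N K (\<lambda>x. D * f x) xs * G"
    using msum_mult_left[OF D, of xs f] f by simp
  also have "\<dots> = msum N N (\<lambda>x. D * f x * G) xs"
    using msum_mult_right[OF G, of xs "\<lambda>x. D * f x"] D f by auto
  finally show ?thesis by simp
qed

lemma set_upt_atMost: "2 \<le> s \<Longrightarrow> {0..<s - Suc 0} = {..s - 2}"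
  by auto

lemma comb1: "(U :: complex mat) \<in> carrier_mat N N \<Longrightarrow> V \<in> carrier_mat N N \<Longrightarrow> (U + V) + (- U + (- V + 0\<^sub>m N N)) = 0\<^sub>m N N"
  by (intro eq_matI) auto
lemma comb2: "(U :: complex mat) \<in> carrier_mat N N \<Longrightarrow> V \<in> carrier_mat N N \<Longrightarrow> - V + (- U + ((U + V) + 0\<^sub>m N N)) = 0\<^sub>m N N"
  by (intro eq_matI) auto

lemma sand_add: assumes D: "D \<in> carrier_mat N K" and S: "S \<in> carrier_mat K K" and P: "P \<in> carrier_mat K K"
  and G: "G \<in> carrier_mat K N"
  shows "D * (S + P) * G = D * S * G + D * P * G"
  using D S P G by (simp add: mult_add_distrib_mat[OF D S P] add_mult_distrib_mat[of _ N K _ _ N])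

lemma series_inverse:
  assumes A: "A \<in> carrier_mat K K" and Bm: "Bm \<in> carrier_mat K K"
    and G: "G \<in> carrier_mat K N" and D: "D \<in> carrier_mat N K"
    and hc: "G * D + A * Bm = Bm * A"
  shows "poly_inverse_pair N (Xcoeff N A Bm G D) (Ycoeff N A Bm G D)"
proof -
  interpret R: ring "RM K" by (rule ring_mat)
  have Ac: "A \<in> carrier (RM K)" and Bc: "Bm \<in> carrier (RM K)" and Cc: "G * D \<in> carrier (RM K)"
    using A Bm G D by (auto simp: ring_mat_simps)
  have hcR: "G * D \<oplus>\<^bsub>RM K\<^esub> A \<otimes>\<^bsub>RM K\<^esub> Bm = Bm \<otimes>\<^bsub>RM K\<^esub> A"
    using hc by (simp add: ring_mat_simps)
  define Pm where "Pm s = R.PPs A Bm s" for s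
  define Qm where "Qm s = R.QQs A Bm s" for s
  have Pmc: "Pm s \<in> carrier_mat K K" for s unfolding Pm_def using R.PPs_closed[OF Ac Bc] by (simp add: ring_mat_simps)
  have Qmc: "Qm s \<in> carrier_mat K K" for s unfolding Qm_def using R.QQs_closed[OF Ac Bc] by (simp add: ring_mat_simps)
  have Pm_eq: "msum K K (\<lambda>j. A ^\<^sub>m j * Bm ^\<^sub>m (s - 2 - j)) [0..<s - 1] = Pm s" if s: "2 \<le> s" for s
  proof -
    have "msum K K (\<lambda>j. A ^\<^sub>m j * Bm ^\<^sub>m (s - 2 - j)) [0..<s - 1]
        = finsum (RM K) (\<lambda>j. A ^\<^sub>m j * Bm ^\<^sub>m (s - 2 - j)) {..s - 2}"
      using A Bm s by (subst msum_finsum) (auto simp: set_upt_atMost)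
    also have "\<dots> = R.PP A Bm (s - 2)" unfolding R.PP_def
      by (rule R.finsum_cong') (use A Bm in \<open>auto simp: pow_mat_ring_pow[symmetric] ring_mat_simps\<close>)
    finally show ?thesis using s by (simp add: Pm_def R.PPs_def)
  qed
  have Qm_eq: "msum K K (\<lambda>j. Bm ^\<^sub>m (s - 2 - j) * A ^\<^sub>m j) [0..<s - 1] = Qm s" if s: "2 \<le> s" for s
  proof -
    have "msum K K (\<lambda>j. Bm ^\<^sub>m (s - 2 - j) * A ^\<^sub>m j) [0..<s - 1]
        = finsum (RM K) (\<lambda>j. Bm ^\<^sub>m (s - 2 - j) * A ^\<^sub>m j) {..s - 2}"
      using A Bm s by (subst msum_finsum) (auto simp: set_upt_atMost)
    also have "\<dots> = R.QQ A Bm (s - 2)" unfolding R.QQ_def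
      by (rule R.finsum_cong') (use A Bm in \<open>auto simp: pow_mat_ring_pow[symmetric] ring_mat_simps\<close>)
    finally show ?thesis using s by (simp add: Qm_def R.QQs_def)
  qed
  have Pm01: "Pm s = 0\<^sub>m K K" if "s < 2" for s using that by (simp add: Pm_def R.PPs_def ring_mat_simps)
  have Qm01: "Qm s = 0\<^sub>m K K" if "s < 2" for s using that by (simp add: Qm_def R.QQs_def ring_mat_simps)
  have X: "Xcoeff N A Bm G D s = (if s = 0 then 1\<^sub>m N else - (D * Pm s * G))" for s
  proof (cases "s < 2")
    case True
    then show ?thesis using D G by (auto simp: Xcoeff_def Pm01 intro!: eq_matI)
  next
    case False
    have "msum N N (\<lambda>j. D * A ^\<^sub>m j * Bm ^\<^sub>m (s - 2 - j) * G) [0..<s - 1]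
       = msum N N (\<lambda>j. D * (A ^\<^sub>m j * Bm ^\<^sub>m (s - 2 - j)) * G) [0..<s - 1]"
      by (rule msum_cong) (use A Bm D in \<open>auto simp: assoc_mult_mat[of _ N K _ K _ K]\<close>)
    also have "\<dots> = D * Pm s * G"
      using False by (subst msum_sandwich[OF D G]) (use A Bm Pm_eq in auto)
    finally show ?thesis using False by (simp add: Xcoeff_def)
  qed
  have Y: "Ycoeff N A Bm G D s = (if s = 0 then 1\<^sub>m N else D * Qm s * G)" for s
  proof (cases "s < 2")
    case True
    then show ?thesis using D G by (auto simp: Ycoeff_def Qm01)
  next
    case False
    have "msum N N (\<lambda>j. D * Bm ^\<^sub>m (s - 2 - j) * A ^\<^sub>m j * G) [0..<s - 1]
       = msum N N (\<lambda>j. D * (Bm ^\<^sub>m (s - 2 - j) * A ^\<^sub>m j) * G) [0..<s - 1]"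
      by (rule msum_cong) (use A Bm D in \<open>auto simp: assoc_mult_mat[of _ N K _ K _ K]\<close>)
    also have "\<dots> = D * Qm s * G"
      using False by (subst msum_sandwich[OF D G]) (use A Bm Qm_eq in auto)
    finally show ?thesis using False by (simp add: Ycoeff_def)
  qed
  have Xc: "Xcoeff N A Bm G D p \<in> carrier_mat N N" for p unfolding X using D G Pmc by auto
  have Yc: "Ycoeff N A Bm G D p \<in> carrier_mat N N" for p unfolding Y using D G Qmc by auto
  have XYc: "Xcoeff N A Bm G D p * Ycoeff N A Bm G D q \<in> carrier_mat N N" for p q
    using Xc[of p] Yc[of q] by (meson mult_carrier_mat)
  have YXc: "Ycoeff N A Bm G D p * Xcoeff N A Bm G D q \<in> carrier_mat N N" for p q
    using Xc[of q] Yc[of p] by (meson mult_carrier_mat)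
  have GDc: "G * D \<in> carrier_mat K K" using G D by simp
  have tc1: "Pm p * (G * D) * Qm q \<in> carrier_mat K K" for p q
    using Pmc[of p] Qmc[of q] GDc by (meson mult_carrier_mat)
  have tc2: "Qm p * (G * D) * Pm q \<in> carrier_mat K K" for p q
    using Pmc[of q] Qmc[of p] GDc by (meson mult_carrier_mat)
  have sS: "msum K K (\<lambda>p. Pm p * (G * D) * Qm (m - p)) [1..<m] + Pm m = Qm m" for m
  proof -
    have "msum K K (\<lambda>p. Pm p * (G * D) * Qm (m - p)) [1..<m] = finsum (RM K) (\<lambda>p. Pm p * (G * D) * Qm (m - p)) {1..<m}"
      using tc1 tc2 by (subst msum_finsum) auto
    then show ?thesis using R.shiftS[OF Ac Bc Cc hcR, of m] by (simp add: Pm_def Qm_def ring_mat_simps)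
  qed
  have sR: "msum K K (\<lambda>p. Qm p * (G * D) * Pm (m - p)) [1..<m] + Pm m = Qm m" for m
  proof -
    have "msum K K (\<lambda>p. Qm p * (G * D) * Pm (m - p)) [1..<m] = finsum (RM K) (\<lambda>p. Qm p * (G * D) * Pm (m - p)) {1..<m}"
      using tc1 tc2 by (subst msum_finsum) auto
    then show ?thesis using R.shiftR[OF Ac Bc Cc hcR, of m] by (simp add: Pm_def Qm_def ring_mat_simps)
  qed
  show ?thesis unfolding poly_inverse_pair_def
  proof (intro conjI allI)
    fix m
    show "msum N N (\<lambda>p. Xcoeff N A Bm G D p * Ycoeff N A Bm G D (m - p)) [0..<Suc m] = (if m = 0 then 1\<^sub>m N else 0\<^sub>m N N)"
    proof (cases "m = 0")
      case True then show ?thesis by (simp add: X Y)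
    next
      case False
      define S where "S = msum K K (\<lambda>p. Pm p * (G * D) * Qm (m - p)) [1..<m]"
      have Sc: "S \<in> carrier_mat K K" unfolding S_def by (rule msum_carrier) (rule tc1)
      have mid: "msum N N (\<lambda>p. Xcoeff N A Bm G D p * Ycoeff N A Bm G D (m - p)) [1..<m] = - (D * S * G)"
      proof -
        have "msum N N (\<lambda>p. Xcoeff N A Bm G D p * Ycoeff N A Bm G D (m - p)) [1..<m]
           = msum N N (\<lambda>p. - (D * (Pm p * (G * D) * Qm (m - p)) * G)) [1..<m]"
          by (rule msum_cong) (use D G Pmc Qmc in \<open>auto simp: X Y sandwich[OF D Pmc Qmc G]\<close>)
        also have "\<dots> = - msum N N (\<lambda>p. D * (Pm p * (G * D) * Qm (m - p)) * G) [1..<m]"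
          by (rule msum_uminus) (use D G tc1 in \<open>meson mult_carrier_mat\<close>)
        also have "\<dots> = - (D * S * G)" unfolding S_def by (subst msum_sandwich[OF D G]) (use tc1 in auto)
        finally show ?thesis .
      qed
      have m1: "1 \<le> m" using False by simp
      have "msum N N (\<lambda>p. Xcoeff N A Bm G D p * Ycoeff N A Bm G D (m - p)) [0..<Suc m]
          = Xcoeff N A Bm G D 0 * Ycoeff N A Bm G D m + (msum N N (\<lambda>p. Xcoeff N A Bm G D p * Ycoeff N A Bm G D (m - p)) [1..<m] + (Xcoeff N A Bm G D m * Ycoeff N A Bm G D 0 + 0\<^sub>m N N))"
        unfolding upt_split[OF m1] msum_Cons by (subst msum_append) (auto intro: XYc)
      also have "\<dots> = (D * Qm m * G) + (- (D * S * G) + (- (D * Pm m * G) + 0\<^sub>m N N))"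
        unfolding mid using False D G Pmc Qmc by (simp add: X Y)
      also have "\<dots> = (D * S * G + D * Pm m * G) + (- (D * S * G) + (- (D * Pm m * G) + 0\<^sub>m N N))"
      proof -
        have "D * Qm m * G = D * S * G + D * Pm m * G"
          unfolding S_def by (subst sS[of m, symmetric]) (rule sand_add[OF D Sc Pmc G, unfolded S_def])
        then show ?thesis by simp
      qed
      also have "\<dots> = 0\<^sub>m N N" by (rule comb1) (use D G Sc Pmc in \<open>meson mult_carrier_mat\<close>)+
      finally show ?thesis using False by simp
    qed
  next
    fix m
    show "msum N N (\<lambda>p. Ycoeff N A Bm G D p * Xcoeff N A Bm G D (m - p)) [0..<Suc m] = (if m = 0 then 1\<^sub>m N else 0\<^sub>m N N)"
    proof (cases "m = 0")
      case True then show ?thesis by (simp add: X Y)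
    next
      case False
      define S where "S = msum K K (\<lambda>p. Qm p * (G * D) * Pm (m - p)) [1..<m]"
      have Sc: "S \<in> carrier_mat K K" unfolding S_def by (rule msum_carrier) (rule tc2)
      have mid: "msum N N (\<lambda>p. Ycoeff N A Bm G D p * Xcoeff N A Bm G D (m - p)) [1..<m] = - (D * S * G)"
      proof -
        have "msum N N (\<lambda>p. Ycoeff N A Bm G D p * Xcoeff N A Bm G D (m - p)) [1..<m]
           = msum N N (\<lambda>p. - (D * (Qm p * (G * D) * Pm (m - p)) * G)) [1..<m]"
          by (rule msum_cong) (use D G Pmc Qmc in \<open>auto simp: X Y sandwich[OF D Qmc Pmc G]\<close>)
        also have "\<dots> = - msum N N (\<lambda>p. D * (Qm p * (G * D) * Pm (m - p)) * G) [1..<m]"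
          by (rule msum_uminus) (use D G tc2 in \<open>meson mult_carrier_mat\<close>)
        also have "\<dots> = - (D * S * G)" unfolding S_def by (subst msum_sandwich[OF D G]) (use tc2 in auto)
        finally show ?thesis .
      qed
      have m1: "1 \<le> m" using False by simp
      have "msum N N (\<lambda>p. Ycoeff N A Bm G D p * Xcoeff N A Bm G D (m - p)) [0..<Suc m]
          = Ycoeff N A Bm G D 0 * Xcoeff N A Bm G D m + (msum N N (\<lambda>p. Ycoeff N A Bm G D p * Xcoeff N A Bm G D (m - p)) [1..<m] + (Ycoeff N A Bm G D m * Xcoeff N A Bm G D 0 + 0\<^sub>m N N))"
        unfolding upt_split[OF m1] msum_Cons by (subst msum_append) (auto intro: YXc)
      also have "\<dots> = - (D * Pm m * G) + (- (D * S * G) + ((D * Qm m * G) + 0\<^sub>m N N))"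
        unfolding mid using False D G Pmc Qmc by (simp add: X Y)
      also have "\<dots> = - (D * Pm m * G) + (- (D * S * G) + ((D * S * G + D * Pm m * G) + 0\<^sub>m N N))"
      proof -
        have "D * Qm m * G = D * S * G + D * Pm m * G"
          unfolding S_def by (subst sR[of m, symmetric]) (rule sand_add[OF D Sc Pmc G, unfolded S_def])
        then show ?thesis by simp
      qed
      also have "\<dots> = 0\<^sub>m N N" by (rule comb2) (use D G Sc Pmc in \<open>meson mult_carrier_mat\<close>)+
      finally show ?thesis using False by simp
    qed
  qed
qed


lemma sum_single: "finite S \<Longrightarrow> kk \<in> S \<Longrightarrow> (\<And>k. k \<in> S \<Longrightarrow> k \<noteq> kk \<Longrightarrow> h k = 0) \<Longrightarrow> sum h S = (h kk :: 'a :: comm_monoid_add)"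
  by (metis (mono_tags, lifting) sum.remove DiffE insertCI sum.neutral add.right_neutral)

lemma offs_Suc: "offs d (Suc i) = offs d i + (if i \<ge> 1 then d i else 0)"
  unfolding offs_def by (cases "i \<ge> 1") (auto simp: sum.atLeastLessThan_Suc)

lemma sum_1_to: "1 \<le> i \<Longrightarrow> sum d {1..i} = offs d i + d i"
  unfolding offs_def by (metis Suc_le_eq add.commute atLeastLessThanSuc_atLeastAtMost sum.atLeastLessThan_Suc)

lemma offs_le_mono: "i \<le> j \<Longrightarrow> offs d i \<le> offs d j"
  unfolding offs_def by (rule sum_mono2) auto

lemma sum_1_le_offs: "y < i \<Longrightarrow> sum d {1..y} \<le> offs d i"
  unfolding offs_def by (rule sum_mono2) auto

lemma blk_props:
  assumes r: "r < sum d {1..m}"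
  shows "1 \<le> blk d r" "blk d r \<le> m" "offs d (blk d r) \<le> r" "r < offs d (blk d r) + d (blk d r)"
proof -
  let ?P = "\<lambda>i. r < sum d {1..i}"
  have P: "?P (blk d r)" unfolding blk_def using r by (rule LeastI)
  show le: "blk d r \<le> m" unfolding blk_def using r by (rule Least_le)
  show one: "1 \<le> blk d r"
  proof (rule ccontr)
    assume "\<not> 1 \<le> blk d r" then have "blk d r = 0" by simp
    then show False using P by simp
  qed
  have np: "\<not> ?P (blk d r - 1)" unfolding blk_def
    by (rule not_less_Least) (use one in \<open>simp add: blk_def\<close>)
  have "sum d {1..blk d r - 1} = offs d (blk d r)"
    unfolding offs_def using one by (intro sum.cong) auto
  then show "offs d (blk d r) \<le> r" using np by simp
  show "r < offs d (blk d r) + d (blk d r)" using P sum_1_to[OF one] by simp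
qed

lemma blk_offs: assumes i: "1 \<le> i" and a: "a < d i" shows "blk d (offs d i + a) = i"
  unfolding blk_def
proof (rule Least_equality)
  show "offs d i + a < sum d {1..i}" using sum_1_to[OF i] a by simp
next
  fix y assume y: "offs d i + a < sum d {1..y}"
  show "i \<le> y"
  proof (rule ccontr)
    assume "\<not> i \<le> y"
    then have "sum d {1..y} \<le> offs d i" by (intro sum_1_le_offs) simp
    then show False using y by simp
  qed
qed

lemma sum_lessThan_add: "(\<Sum>t<a + (b::nat). g t) = (\<Sum>t<a. g t) + (\<Sum>t<b. g (a + t))"
  by (induction b) (auto simp: add.assoc)

lemma sum_blocks: "(\<Sum>t<sum d {1..m}. g t) = (\<Sum>k\<in>{1..m}. \<Sum>a<d k. g (offs d k + a))"
proof (induction m)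
  case 0 then show ?case by simp
next
  case (Suc m)
  have o: "offs d (Suc m) = sum d {1..m}" unfolding offs_def
    by (intro sum.cong) auto
  have "sum d {1..Suc m} = sum d {1..m} + d (Suc m)" by simp
  then show ?case using Suc o by (simp add: sum_lessThan_add)
qed

lemma block_mult:
  "block_mat m d1 d2 E * block_mat m d2 d3 F =
   block_mat m d1 d3 (\<lambda>i j a b. \<Sum>k\<in>{1..m}. \<Sum>c<d2 k. E i k a c * F k j c b)"
proof (rule eq_matI)
  fix r s assume r: "r < dim_row (block_mat m d1 d3 (\<lambda>i j a b. \<Sum>k\<in>{1..m}. \<Sum>c<d2 k. E i k a c * F k j c b))"
    and s: "s < dim_col (block_mat m d1 d3 (\<lambda>i j a b. \<Sum>k\<in>{1..m}. \<Sum>c<d2 k. E i k a c * F k j c b))"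
  then have r': "r < sum d1 {1..m}" and s': "s < sum d3 {1..m}" by (auto simp: block_mat_def)
  have "(block_mat m d1 d2 E * block_mat m d2 d3 F) $$ (r, s) =
     (\<Sum>t<sum d2 {1..m}. E (blk d1 r) (blk d2 t) (r - offs d1 (blk d1 r)) (t - offs d2 (blk d2 t)) *
        F (blk d2 t) (blk d3 s) (t - offs d2 (blk d2 t)) (s - offs d3 (blk d3 s)))"
    using r' s' by (simp add: block_mat_def scalar_prod_def atLeast0LessThan)
  also have "\<dots> = (\<Sum>k\<in>{1..m}. \<Sum>c<d2 k. E (blk d1 r) k (r - offs d1 (blk d1 r)) c *
        F k (blk d3 s) c (s - offs d3 (blk d3 s)))"
    unfolding sum_blocks by (intro sum.cong refl) (auto simp: blk_offs)
  also have "\<dots> = block_mat m d1 d3 (\<lambda>i j a b. \<Sum>k\<in>{1..m}. \<Sum>c<d2 k. E i k a c * F k j c b) $$ (r, s)"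
    using r' s' by (simp add: block_mat_def)
  finally show "(block_mat m d1 d2 E * block_mat m d2 d3 F) $$ (r, s) = block_mat m d1 d3 (\<lambda>i j a b. \<Sum>k\<in>{1..m}. \<Sum>c<d2 k. E i k a c * F k j c b) $$ (r, s)" .
qed (auto simp: block_mat_def)

lemma block_cong:
  assumes "\<And>i j a b. 1 \<le> i \<Longrightarrow> i \<le> m \<Longrightarrow> 1 \<le> j \<Longrightarrow> j \<le> m \<Longrightarrow> a < d1 i \<Longrightarrow> b < d2 j \<Longrightarrow> E i j a b = F i j a b"
  shows "block_mat m d1 d2 E = block_mat m d1 d2 F"
proof (rule eq_matI)
  fix r s assume "r < dim_row (block_mat m d1 d2 F)" "s < dim_col (block_mat m d1 d2 F)"
  then have r: "r < sum d1 {1..m}" and s: "s < sum d2 {1..m}" by (auto simp: block_mat_def)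
  show "block_mat m d1 d2 E $$ (r, s) = block_mat m d1 d2 F $$ (r, s)"
    using r s blk_props[OF r] blk_props[OF s] by (simp add: block_mat_def assms)
qed (auto simp: block_mat_def)

lemma block_add: "block_mat m d1 d2 E + block_mat m d1 d2 F = block_mat m d1 d2 (\<lambda>i j a b. E i j a b + F i j a b)"
  by (rule eq_matI) (auto simp: block_mat_def)


lemma prodentry: assumes X: "X \<in> carrier_mat p q" and Y: "Y \<in> carrier_mat q r" and a: "a < p" and b: "b < r"
  shows "(\<Sum>c<q. X $$ (a, c) * ((e::complex) * Y $$ (c, b))) = e * (X * Y) $$ (a, b)"
  using X Y a b by (simp add: scalar_prod_def sum_distrib_left atLeast0LessThan algebra_simps)

lemma Bcar: assumes L: "Lambda_A n dv dw B Gam Del" and "1 \<le> i" "i \<le> 2*n-1" "1 \<le> j" "j \<le> 2*n-1" "i = j + 1 \<or> j = i + 1"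
  shows "B i j \<in> carrier_mat (dv i) (dv j)"
  using L assms unfolding Lambda_A_def by blast

lemma AB: assumes L: "Lambda_A n dv dw B Gam Del"
  shows "Amat n dv B * Bmat n dv B = block_mat (2*n-1) dv dv
     (\<lambda>i j a b. if i = j \<and> 2 \<le> i then eps n (i-1) * (B i (i-1) * B (i-1) i) $$ (a,b) else 0)"
  unfolding Amat_def Bmat_def block_mult
proof (rule block_cong)
  fix i j a b assume i: "1 \<le> i" "i \<le> 2*n-1" and j: "1 \<le> j" "j \<le> 2*n-1" and a: "a < dv i" and b: "b < dv j"
  show "(\<Sum>k\<in>{1..2*n-1}. \<Sum>c<dv k. (if 1 \<le> k \<and> k \<le> 2*n-2 \<and> i = k + 1 then B i k $$ (a, c) else 0) *
          (if 1 \<le> k \<and> k \<le> 2*n-2 \<and> j = k + 1 then eps n k * B k j $$ (c, b) else 0)) =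
        (if i = j \<and> 2 \<le> i then eps n (i-1) * (B i (i-1) * B (i-1) i) $$ (a,b) else 0)"
  proof (cases "i = j \<and> 2 \<le> i")
    case True
    have "(\<Sum>k\<in>{1..2*n-1}. \<Sum>c<dv k. (if 1 \<le> k \<and> k \<le> 2*n-2 \<and> i = k + 1 then B i k $$ (a, c) else 0) *
          (if 1 \<le> k \<and> k \<le> 2*n-2 \<and> j = k + 1 then eps n k * B k j $$ (c, b) else 0)) =
          (\<Sum>c<dv (i-1). B i (i-1) $$ (a, c) * (eps n (i-1) * B (i-1) i $$ (c, b)))"
    proof (subst sum_single[where kk = "i - 1" and S = "{1..2*n-1}"])
      have c: "1 \<le> i - 1" "i - 1 \<le> 2*n-2" "i = i - 1 + 1" "j = i - 1 + 1" using True i by auto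
      show "(\<Sum>c<dv (i - 1). (if 1 \<le> i - 1 \<and> i - 1 \<le> 2*n-2 \<and> i = i - 1 + 1 then B i (i - 1) $$ (a, c) else 0) *
          (if 1 \<le> i - 1 \<and> i - 1 \<le> 2*n-2 \<and> j = i - 1 + 1 then eps n (i - 1) * B (i - 1) j $$ (c, b) else 0)) =
          (\<Sum>c<dv (i-1). B i (i-1) $$ (a, c) * (eps n (i-1) * B (i-1) i $$ (c, b)))"
        unfolding if_P[OF conjI[OF c(1) conjI[OF c(2) c(3)]]] if_P[OF conjI[OF c(1) conjI[OF c(2) c(4)]]] using True by simp
    qed (use True i in \<open>auto intro!: sum.neutral\<close>)
    also have "\<dots> = eps n (i-1) * (B i (i-1) * B (i-1) i) $$ (a,b)"
      by (rule prodentry[OF Bcar[OF L] Bcar[OF L]]) (use True i a b in auto)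
    finally show ?thesis using True by simp
  next
    case False
    then show ?thesis by (auto intro!: sum.neutral)
  qed
qed

lemma BA: assumes L: "Lambda_A n dv dw B Gam Del"
  shows "Bmat n dv B * Amat n dv B = block_mat (2*n-1) dv dv
     (\<lambda>i j a b. if i = j \<and> i \<le> 2*n-2 then eps n i * (B i (i+1) * B (i+1) i) $$ (a,b) else 0)"
  unfolding Amat_def Bmat_def block_mult
proof (rule block_cong)
  fix i j a b assume i: "1 \<le> i" "i \<le> 2*n-1" and j: "1 \<le> j" "j \<le> 2*n-1" and a: "a < dv i" and b: "b < dv j"
  show "(\<Sum>k\<in>{1..2*n-1}. \<Sum>c<dv k. (if 1 \<le> i \<and> i \<le> 2*n-2 \<and> k = i + 1 then eps n i * B i k $$ (a, c) else 0) *
          (if 1 \<le> j \<and> j \<le> 2*n-2 \<and> k = j + 1 then B k j $$ (c, b) else 0)) =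
        (if i = j \<and> i \<le> 2*n-2 then eps n i * (B i (i+1) * B (i+1) i) $$ (a,b) else 0)"
  proof (cases "i = j \<and> i \<le> 2*n-2")
    case True
    have "(\<Sum>k\<in>{1..2*n-1}. \<Sum>c<dv k. (if 1 \<le> i \<and> i \<le> 2*n-2 \<and> k = i + 1 then eps n i * B i k $$ (a, c) else 0) *
          (if 1 \<le> j \<and> j \<le> 2*n-2 \<and> k = j + 1 then B k j $$ (c, b) else 0)) =
          (\<Sum>c<dv (i+1). B i (i+1) $$ (a, c) * (eps n i * B (i+1) i $$ (c, b)))"
    proof (subst sum_single[where kk = "i + 1" and S = "{1..2*n-1}"])
      have c: "1 \<le> i" "i \<le> 2*n-2" "i + 1 = i + 1" "1 \<le> j" "j \<le> 2*n-2" "i + 1 = j + 1" using True i by auto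
      show "(\<Sum>c<dv (i + 1). (if 1 \<le> i \<and> i \<le> 2*n-2 \<and> i + 1 = i + 1 then eps n i * B i (i + 1) $$ (a, c) else 0) *
          (if 1 \<le> j \<and> j \<le> 2*n-2 \<and> i + 1 = j + 1 then B (i + 1) j $$ (c, b) else 0)) =
          (\<Sum>c<dv (i+1). B i (i+1) $$ (a, c) * (eps n i * B (i+1) i $$ (c, b)))"
        unfolding if_P[OF conjI[OF c(1) conjI[OF c(2) c(3)]]] if_P[OF conjI[OF c(4) conjI[OF c(5) c(6)]]] using True
        by (simp add: algebra_simps)
    qed (use True i in \<open>auto intro!: sum.neutral\<close>)
    also have "\<dots> = eps n i * (B i (i+1) * B (i+1) i) $$ (a,b)"
      by (rule prodentry[OF Bcar[OF L] Bcar[OF L]]) (use True i a b in auto)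
    finally show ?thesis using True by simp
  next
    case False
    then show ?thesis by (auto intro!: sum.neutral)
  qed
qed

lemma GD: assumes L: "Lambda_A n dv dw B Gam Del"
  shows "Gmat n dv dw Gam * Dmat n dv dw Del = block_mat (2*n-1) dv dv
     (\<lambda>i j a b. if i = j then (Gam i * Del i) $$ (a,b) else 0)"
  unfolding Gmat_def Dmat_def block_mult
proof (rule block_cong)
  fix i j a b assume i: "1 \<le> i" "i \<le> 2*n-1" and j: "1 \<le> j" "j \<le> 2*n-1" and a: "a < dv i" and b: "b < dv j"
  have G: "Gam i \<in> carrier_mat (dv i) (dw i)" and D: "Del i \<in> carrier_mat (dw i) (dv i)"
    using L i unfolding Lambda_A_def by auto
  show "(\<Sum>k\<in>{1..2*n-1}. \<Sum>c<dw k. (if i = k then Gam i $$ (a, c) else 0) * (if k = j then Del k $$ (c, b) else 0)) =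
        (if i = j then (Gam i * Del i) $$ (a,b) else 0)"
  proof (cases "i = j")
    case True
    have "(\<Sum>k\<in>{1..2*n-1}. \<Sum>c<dw k. (if i = k then Gam i $$ (a, c) else 0) * (if k = j then Del k $$ (c, b) else 0)) =
          (\<Sum>c<dw i. Gam i $$ (a, c) * (1 * Del i $$ (c, b)))"
      by (subst sum_single[where kk = i and S = "{1..2*n-1}"]) (use True i in \<open>auto intro!: sum.neutral\<close>)
    also have "\<dots> = 1 * (Gam i * Del i) $$ (a,b)"
      by (rule prodentry[OF G D]) (use True i a b in auto)
    finally show ?thesis using True by simp
  next
    case False
    then show ?thesis by (auto intro!: sum.neutral)
  qed
qed

lemma Bz_prod: assumes L: "Lambda_A n dv dw B Gam Del" and i: "1 \<le> i" "i \<le> 2*n-1"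
  and k: "k + 1 = i \<or> k = i + 1"
  shows "Bz n dv B i k * Bz n dv B k i \<in> carrier_mat (dv i) (dv i)"
    "a < dv i \<Longrightarrow> b < dv i \<Longrightarrow> (Bz n dv B i k * Bz n dv B k i) $$ (a, b) =
       (if 1 \<le> k \<and> k \<le> 2*n-1 then (B i k * B k i) $$ (a, b) else 0)"
proof -
  show "Bz n dv B i k * Bz n dv B k i \<in> carrier_mat (dv i) (dv i)"
  proof (cases "1 \<le> k \<and> k \<le> 2*n-1")
    case True
    then show ?thesis using Bcar[OF L, of i k] Bcar[OF L, of k i] i k by (auto simp: Bz_def)
  next
    case False
    then show ?thesis using i by (auto simp: Bz_def)
  qed
  assume ab: "a < dv i" "b < dv i"
  show "(Bz n dv B i k * Bz n dv B k i) $$ (a, b) =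
       (if 1 \<le> k \<and> k \<le> 2*n-1 then (B i k * B k i) $$ (a, b) else 0)"
  proof (cases "1 \<le> k \<and> k \<le> 2*n-1")
    case True
    then show ?thesis using i by (auto simp: Bz_def)
  next
    case False
    then show ?thesis using i ab by (auto simp: Bz_def)
  qed
qed

lemma key: assumes L: "Lambda_A n dv dw B Gam Del" and i: "1 \<le> i" "i \<le> 2*n-1" and ab: "a < dv i" "b < dv i"
  shows "(Gam i * Del i) $$ (a,b) + (if 2 \<le> i then eps n (i-1) * (B i (i-1) * B (i-1) i) $$ (a,b) else 0)
       = (if i \<le> 2*n-2 then eps n i * (B i (i+1) * B (i+1) i) $$ (a,b) else 0)"
proof -
  have k1: "i - 1 + 1 = i \<or> i - 1 = i + 1" using i by auto
  have k2: "i + 1 + 1 = i \<or> i + 1 = i + 1" by auto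
  note X = Bz_prod[OF L i k1] and Y = Bz_prod[OF L i k2]
  have Xe: "(Bz n dv B i (i-1) * Bz n dv B (i-1) i) $$ (a, b) = (if 2 \<le> i then (B i (i-1) * B (i-1) i) $$ (a, b) else 0)"
    using X(2)[OF ab] i by auto
  have Ye: "(Bz n dv B i (i+1) * Bz n dv B (i+1) i) $$ (a, b) = (if i \<le> 2*n-2 then (B i (i+1) * B (i+1) i) $$ (a, b) else 0)"
    using Y(2)[OF ab] i by auto
  have rels: "\<forall>i. 1 \<le> i \<and> i \<le> n - 1 \<longrightarrow>
        Bz n dv B i (i+1) * Bz n dv B (i+1) i - Bz n dv B i (i-1) * Bz n dv B (i-1) i = Gam i * Del i"
     "- (Bz n dv B n (n-1) * Bz n dv B (n-1) n) - Bz n dv B n (n+1) * Bz n dv B (n+1) n = Gam n * Del n"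
     "\<forall>i. n + 1 \<le> i \<and> i \<le> 2*n - 1 \<longrightarrow>
        Bz n dv B i (i-1) * Bz n dv B (i-1) i - Bz n dv B i (i+1) * Bz n dv B (i+1) i = Gam i * Del i"
    using L unfolding Lambda_A_def by blast+
  consider "i \<le> n - 1" | "i = n" | "n + 1 \<le> i" by linarith
  then show ?thesis
  proof cases
    case 1
    have "(Gam i * Del i) $$ (a,b) = (Bz n dv B i (i+1) * Bz n dv B (i+1) i - Bz n dv B i (i-1) * Bz n dv B (i-1) i) $$ (a,b)"
      using rels(1) 1 i by auto
    also have "\<dots> = (Bz n dv B i (i+1) * Bz n dv B (i+1) i) $$ (a,b) - (Bz n dv B i (i-1) * Bz n dv B (i-1) i) $$ (a,b)"
      using X(1) ab by (intro index_minus_mat) auto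
    finally show ?thesis unfolding Xe Ye using 1 i by (auto simp: eps_def)
  next
    case 2
    have "(Gam i * Del i) $$ (a,b) = (- (Bz n dv B i (i-1) * Bz n dv B (i-1) i) - Bz n dv B i (i+1) * Bz n dv B (i+1) i) $$ (a,b)"
      using rels(2) 2 by auto
    also have "\<dots> = - (Bz n dv B i (i-1) * Bz n dv B (i-1) i) $$ (a,b) - (Bz n dv B i (i+1) * Bz n dv B (i+1) i) $$ (a,b)"
      using carrier_matD[OF X(1)] carrier_matD[OF Y(1)] ab by simp
    finally show ?thesis unfolding Xe Ye using 2 i by (auto simp: eps_def)
  next
    case 3
    have "(Gam i * Del i) $$ (a,b) = (Bz n dv B i (i-1) * Bz n dv B (i-1) i - Bz n dv B i (i+1) * Bz n dv B (i+1) i) $$ (a,b)"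
      using rels(3) 3 i by auto
    also have "\<dots> = (Bz n dv B i (i-1) * Bz n dv B (i-1) i) $$ (a,b) - (Bz n dv B i (i+1) * Bz n dv B (i+1) i) $$ (a,b)"
      using Y(1) ab by (intro index_minus_mat) auto
    finally show ?thesis unfolding Xe Ye using 3 i by (auto simp: eps_def)
  qed
qed

lemma hc_blocks: assumes L: "Lambda_A n dv dw B Gam Del"
  shows "Gmat n dv dw Gam * Dmat n dv dw Del + Amat n dv B * Bmat n dv B = Bmat n dv B * Amat n dv B"
  unfolding GD[OF L] AB[OF L] BA[OF L] block_add
  apply (rule block_cong)
  subgoal for i j a b
    using key[OF L, of i a b] by (cases "i = j") auto
  done


theorem lemma4p10:
  fixes n :: nat and dv dw :: "nat \<Rightarrow> nat"
    and B :: "nat \<Rightarrow> nat \<Rightarrow> complex mat" and Gam Del :: "nat \<Rightarrow> complex mat"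
  assumes "n \<ge> 1"
    and "Lambda_A n dv dw B Gam Del"
  shows "poly_inverse_pair (sum dw {1..2*n-1})
           (Xcoeff (sum dw {1..2*n-1}) (Amat n dv B) (Bmat n dv B) (Gmat n dv dw Gam) (Dmat n dv dw Del))
           (Ycoeff (sum dw {1..2*n-1}) (Amat n dv B) (Bmat n dv B) (Gmat n dv dw Gam) (Dmat n dv dw Del))"
proof (rule series_inverse)
  show "Amat n dv B \<in> carrier_mat (sum dv {1..2*n-1}) (sum dv {1..2*n-1})"
    by (simp add: Amat_def block_mat_def)
  show "Bmat n dv B \<in> carrier_mat (sum dv {1..2*n-1}) (sum dv {1..2*n-1})"
    by (simp add: Bmat_def block_mat_def)
  show "Gmat n dv dw Gam \<in> carrier_mat (sum dv {1..2*n-1}) (sum dw {1..2*n-1})"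
    by (simp add: Gmat_def block_mat_def)
  show "Dmat n dv dw Del \<in> carrier_mat (sum dw {1..2*n-1}) (sum dv {1..2*n-1})"
    by (simp add: Dmat_def block_mat_def)
  show "Gmat n dv dw Gam * Dmat n dv dw Del + Amat n dv B * Bmat n dv B = Bmat n dv B * Amat n dv B"
    by (rule hc_blocks[OF assms(2)])
qed

end
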